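(* Let $k\ge 2$ and let $H$ be a $(k-2)$-regular graph. Then for every positive integer $n$, $\mathrm{ex}(n,H,S_k)=\lfloor n/|V(H)|\rfloor$.
   Context: $S_k$ is the star on $k$ vertices (a center joined to $k-1$ leaves). For graphs $H,G$, $\mathcal{N}(H,G)$ is the number of subgraphs of $G$ isomorphic to $H$, and $\mathrm{ex}(n,H,F)$ is the maximum of $\mathcal{N}(H,G)$ over $F$-free graphs $G$ on $n$ vertices. *)

theory Defs
  imports Main
begin

definition is_graph :: "'a set \<Rightarrow> 'a set set \<Rightarrow> bool" where
  "is_graph V E \<longleftrightarrow> finite V \<and> (\<forall>e\<in>E. e \<subseteq> V \<and> card e = 2)"

definition degree :: "'a set \<Rightarrow> 'a set set \<Rightarrow> 'a \<Rightarrow> nat" where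
  "degree V E v = card {u\<in>V. {u, v} \<in> E}"

definition regular :: "nat \<Rightarrow> 'a set \<Rightarrow> 'a set set \<Rightarrow> bool" where
  "regular d V E \<longleftrightarrow> (\<forall>v\<in>V. degree V E v = d)"

definition connected_graph :: "'a set \<Rightarrow> 'a set set \<Rightarrow> bool" where
  "connected_graph V E \<longleftrightarrow> V \<noteq> {} \<and>
     (\<forall>u\<in>V. \<forall>v\<in>V. (\<lambda>x y. {x, y} \<in> E)\<^sup>*\<^sup>* u v)"

definition graph_iso :: "'a set \<Rightarrow> 'a set set \<Rightarrow> 'b set \<Rightarrow> 'b set set \<Rightarrow> bool" where
  "graph_iso V1 E1 V2 E2 \<longleftrightarrow> (\<exists>f. bij_betw f V1 V2 \<and>
     (\<forall>x\<in>V1. \<forall>y\<in>V1. {x, y} \<in> E1 \<longleftrightarrow> {f x, f y} \<in> E2))"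

definition count_copies :: "'a set \<Rightarrow> 'a set set \<Rightarrow> 'b set \<Rightarrow> 'b set set \<Rightarrow> nat" where
  "count_copies VH EH VG EG = card {(V', E'). V' \<subseteq> VG \<and> E' \<subseteq> EG \<and> is_graph V' E' \<and>
       graph_iso VH EH V' E'}"

definition F_free :: "'a set \<Rightarrow> 'a set set \<Rightarrow> 'b set \<Rightarrow> 'b set set \<Rightarrow> bool" where
  "F_free VF EF VG EG \<longleftrightarrow> count_copies VF EF VG EG = 0"

definition ex_gen :: "nat \<Rightarrow> 'a set \<Rightarrow> 'a set set \<Rightarrow> 'b set \<Rightarrow> 'b set set \<Rightarrow> nat" where
  "ex_gen n VH EH VF EF = Max {count_copies VH EH {0..<n} E | E.
       is_graph {0..<n} E \<and> F_free VF EF {0..<n} E}"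

definition star_V :: "nat \<Rightarrow> nat set" where "star_V k = {0..<k}"
definition star_E :: "nat \<Rightarrow> nat set set" where "star_E k = {{0, i} | i. 1 \<le> i \<and> i < k}"

end

theory Submission
  imports Defs
begin


lemma graph_E_finite: "is_graph V E \<Longrightarrow> finite E"
  unfolding is_graph_def by (meson PowI finite_Pow_iff finite_subset subsetI)

lemma copies_finite:
  assumes "is_graph VG EG"
  shows "finite {(V', E'). V' \<subseteq> VG \<and> E' \<subseteq> EG \<and> P V' E'}"
proof -
  have "finite (Pow VG \<times> Pow EG)" using assms graph_E_finite[OF assms] unfolding is_graph_def by auto
  then show ?thesis by (rule finite_subset[rotated]) auto
qed

lemma deg_le_of_free:
  assumes G: "is_graph V E" and k: "k \<ge> 2" and free: "F_free (star_V k) (star_E k) V E" and v: "v \<in> V"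
  shows "degree V E v \<le> k - 2"
proof (rule ccontr)
  assume "\<not> ?thesis"
  then have "k - 1 \<le> card {u\<in>V. {u, v} \<in> E}" unfolding degree_def by simp
  then obtain S where S: "S \<subseteq> {u\<in>V. {u, v} \<in> E}" "card S = k - 1" "finite S"
    by (rule obtain_subset_with_card_n)
  have vS: "v \<notin> S"
  proof
    assume "v \<in> S" then have "{v} \<in> E" using S by auto
    then show False using G unfolding is_graph_def by fastforce
  qed
  obtain b where b: "bij_betw b {1..card S} S" using ex_bij_betw_nat_finite_1[OF S(3)] by blast
  have "{1..card S} = {1..<k}" using S(2) k by auto
  then have b': "bij_betw b {1..<k} S" using b by simp
  define f where "f i = (if i = 0 then v else b i)" for i :: nat
  have bf: "bij_betw f {1..<k} S"
    using b' by (rule bij_betw_cong[THEN iffD1, rotated]) (auto simp: f_def)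
  have ff: "bij_betw f {0..<k} (insert v S)"
  proof -
    have "{0..<k} = insert 0 {1..<k}" using k by auto
    moreover have "bij_betw f (insert 0 {1..<k}) (insert (f 0) S)"
      using notIn_Un_bij_betw3[of 0 "{1..<k}" f S] bf vS by (simp add: f_def)
    ultimately show ?thesis by (simp add: f_def)
  qed
  define E' where "E' = (\<lambda>u. {v, u}) ` S"
  have gr: "is_graph (insert v S) E'"
    unfolding is_graph_def E'_def using S(3) vS by (auto simp: card_2_iff)
  have iso: "graph_iso (star_V k) (star_E k) (insert v S) E'"
    unfolding graph_iso_def star_V_def
  proof (intro exI conjI ballI)
    show "bij_betw f {0..<k} (insert v S)" by (rule ff)
  next
    fix x y assume x: "x \<in> {0..<k}" and y: "y \<in> {0..<k}"
    have fS: "i \<in> {1..<k} \<Longrightarrow> f i \<in> S" for i using bf bij_betwE by blast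
    have f0: "f 0 = v" by (simp add: f_def)
    have fne: "i \<in> {1..<k} \<Longrightarrow> f i \<noteq> v" for i using fS vS by auto
    show "{x, y} \<in> star_E k \<longleftrightarrow> {f x, f y} \<in> E'"
    proof
      assume "{x, y} \<in> star_E k"
      then obtain i where i: "{x,y} = {0,i}" "1 \<le> i" "i < k" unfolding star_E_def by auto
      then have "{f x, f y} = {v, f i}" using f0 by (auto simp: doubleton_eq_iff)
      then show "{f x, f y} \<in> E'" unfolding E'_def using fS i by auto
    next
      assume "{f x, f y} \<in> E'"
      then obtain u where u: "u \<in> S" "{f x, f y} = {v, u}" unfolding E'_def by auto
      have uv: "u \<noteq> v" using u vS by auto
      show "{x, y} \<in> star_E k"
      proof (cases "x = 0")
        case True
        have "y \<noteq> 0"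
        proof
          assume "y = 0" then have "f x = v" "f y = v" using True f0 by auto
          then show False using u uv by (auto simp: doubleton_eq_iff)
        qed
        then have y1: "1 \<le> y" "y < k" using y by auto
        have "{0, y} \<in> star_E k" using y1 unfolding star_E_def by blast
        then show ?thesis using True by simp
      next
        case False
        then have "f x \<noteq> v" using fne x by auto
        then have "f y = v" using u by (auto simp: doubleton_eq_iff)
        then have "y = 0" using fne y by (cases "y = 0") auto
        then have e: "{x, y} = {0, x}" by auto
        have x1: "1 \<le> x" "x < k" using False x by auto
        have "{0, x} \<in> star_E k" using x1 unfolding star_E_def by blast
        then show ?thesis unfolding e .
      qed
    qed
  qed
  have sub1: "insert v S \<subseteq> V" using S v by auto
  have sub2: "E' \<subseteq> E"
  proof
    fix e assume "e \<in> E'"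
    then obtain u where u: "u \<in> S" "e = {v, u}" unfolding E'_def by auto
    then have "{u, v} \<in> E" using S by auto
    moreover have "{v, u} = {u, v}" by (rule insert_commute)
    ultimately show "e \<in> E" using u by simp
  qed
  note sub = sub1 sub2
  let ?C = "{(V', E'). V' \<subseteq> V \<and> E' \<subseteq> E \<and> is_graph V' E' \<and> graph_iso (star_V k) (star_E k) V' E'}"
  have "(insert v S, E') \<in> ?C" using sub gr iso by auto
  moreover have "finite ?C" by (rule copies_finite[OF G])
  ultimately have ne: "?C \<noteq> {}" and fin: "finite ?C" by blast+
  have "card ?C \<noteq> 0"
  proof
    assume "card ?C = 0"
    then have "?C = {}" using card_0_eq[OF fin] by blast
    then show False using ne by blast
  qed
  then show False using free unfolding F_free_def count_copies_def by simp
qed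



lemma free_of_deg:
  assumes G: "is_graph V E" and k: "k \<ge> 2" and deg: "\<forall>v\<in>V. degree V E v \<le> k - 2"
  shows "F_free (star_V k) (star_E k) V E"
proof -
  let ?C = "{(V', E'). V' \<subseteq> V \<and> E' \<subseteq> E \<and> is_graph V' E' \<and> graph_iso (star_V k) (star_E k) V' E'}"
  have "?C = {}"
  proof (rule ccontr)
    assume "?C \<noteq> {}"
    then obtain V' E' where c: "V' \<subseteq> V" "E' \<subseteq> E" "graph_iso (star_V k) (star_E k) V' E'" by auto
    then obtain f where f: "bij_betw f {0..<k} V'"
      "\<forall>x\<in>{0..<k}. \<forall>y\<in>{0..<k}. {x, y} \<in> star_E k \<longleftrightarrow> {f x, f y} \<in> E'"
      unfolding graph_iso_def star_V_def by auto
    have "0 \<in> {0..<k}" using k by simp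
    then have f0: "f 0 \<in> V" using f(1) c(1) bij_betwE by blast
    have "f ` {1..<k} \<subseteq> {u\<in>V. {u, f 0} \<in> E}"
    proof
      fix u assume "u \<in> f ` {1..<k}"
      then obtain i where i: "i \<in> {1..<k}" "u = f i" by auto
      have i1: "1 \<le> i" "i < k" using i by auto
      have "{0, i} \<in> star_E k" using i1 unfolding star_E_def by blast
      moreover have "0 \<in> {0..<k}" "i \<in> {0..<k}" using i1 by auto
      ultimately have "{f 0, f i} \<in> E'" using f(2) by blast
      moreover have "{f 0, f i} = {f i, f 0}" by (rule insert_commute)
      ultimately have "{u, f 0} \<in> E" using c(2) i by auto
      moreover have "u \<in> V" using i f(1) c(1) \<open>i \<in> {0..<k}\<close> bij_betwE by blast
      ultimately show "u \<in> {u\<in>V. {u, f 0} \<in> E}" by simp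
    qed
    moreover have "card (f ` {1..<k}) = k - 1"
    proof -
      have "inj_on f {0..<k}" using f(1) unfolding bij_betw_def by blast
      then have "inj_on f {1..<k}" by (rule inj_on_subset) auto
      then show ?thesis by (simp add: card_image)
    qed
    moreover have "finite {u\<in>V. {u, f 0} \<in> E}" using G unfolding is_graph_def by auto
    ultimately have "k - 1 \<le> degree V E (f 0)" unfolding degree_def by (metis card_mono)
    then show False using deg f0 k by fastforce
  qed
  then show ?thesis unfolding F_free_def count_copies_def by (subst \<open>?C = {}\<close>) (rule card.empty)
qed

lemma iso_nbhd:
  assumes f: "bij_betw f VH V'" and iso: "\<forall>x\<in>VH. \<forall>y\<in>VH. {x,y}\<in>EH \<longleftrightarrow> {f x,f y}\<in>E'"
    and GH: "is_graph VH EH" and G': "is_graph V' E'" and w: "w \<in> VH"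
  shows "f ` {u\<in>VH. {u,w}\<in>EH} = {u\<in>V'. {u, f w}\<in>E'}"
proof
  show "f ` {u\<in>VH. {u,w}\<in>EH} \<subseteq> {u\<in>V'. {u, f w}\<in>E'}"
    using f iso w by (auto dest: bij_betwE)
next
  show "{u\<in>V'. {u, f w}\<in>E'} \<subseteq> f ` {u\<in>VH. {u,w}\<in>EH}"
  proof
    fix u assume u: "u \<in> {u\<in>V'. {u, f w}\<in>E'}"
    then obtain u0 where "u0 \<in> VH" "u = f u0" using f unfolding bij_betw_def by auto
    then show "u \<in> f ` {u\<in>VH. {u,w}\<in>EH}" using u iso w by auto
  qed
qed

lemma iso_path:
  assumes f: "bij_betw f VH V'" and iso: "\<forall>x\<in>VH. \<forall>y\<in>VH. {x,y}\<in>EH \<longleftrightarrow> {f x,f y}\<in>E'"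
    and GH: "is_graph VH EH"
    and p: "(\<lambda>x y. {x, y} \<in> EH)\<^sup>*\<^sup>* a b" and a: "a \<in> VH"
  shows "b \<in> VH \<and> (\<lambda>x y. {x, y} \<in> E')\<^sup>*\<^sup>* (f a) (f b)"
  using p
proof (induction rule: rtranclp_induct)
  case base then show ?case using a by simp
next
  case (step y z)
  have z: "z \<in> VH" using step(2) GH unfolding is_graph_def by auto
  have "{f y, f z} \<in> E'" using iso step z by auto
  then show ?case using step z by (auto intro: rtranclp.rtrancl_into_rtrancl)
qed



lemma upper:
  fixes VH :: "'a set" and EH :: "'a set set" and V :: "'b set"
  assumes G: "is_graph V E" and deg: "\<forall>v\<in>V. degree V E v \<le> d"
    and GH: "is_graph VH EH" and con: "connected_graph VH EH" and reg: "regular d VH EH"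
  shows "count_copies VH EH V E * card VH \<le> card V"
proof -
  define C where "C = {(V', E'). V' \<subseteq> V \<and> E' \<subseteq> E \<and> is_graph V' E' \<and> graph_iso VH EH V' E'}"
  have memC: "(V', E') \<in> C \<longleftrightarrow> V' \<subseteq> V \<and> E' \<subseteq> E \<and> is_graph V' E' \<and> graph_iso VH EH V' E'" for V' E'
    unfolding C_def by simp
  have closed: "y \<in> V' \<and> {y, x} \<in> E'" if c: "(V', E') \<in> C" and x: "x \<in> V'" and e: "{x, y} \<in> E" for V' E' x y
  proof -
    from c have c': "V' \<subseteq> V" "E' \<subseteq> E" "is_graph V' E'" "graph_iso VH EH V' E'" unfolding memC by auto
    then obtain f where f: "bij_betw f VH V'" "\<forall>x\<in>VH. \<forall>y\<in>VH. {x,y}\<in>EH \<longleftrightarrow> {f x,f y}\<in>E'"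
      unfolding graph_iso_def by auto
    obtain w where w: "w \<in> VH" "x = f w" using f(1) x unfolding bij_betw_def by auto
    have "card {u\<in>VH. {u,w}\<in>EH} = d" using reg w unfolding regular_def degree_def by auto
    moreover have "inj_on f {u\<in>VH. {u,w}\<in>EH}" using f(1) unfolding bij_betw_def by (auto intro: inj_on_subset)
    moreover have "{u\<in>V'. {u, x}\<in>E'} = f ` {u\<in>VH. {u,w}\<in>EH}"
      using iso_nbhd[OF f GH c'(3) w(1)] w(2) by simp
    ultimately have c1: "card {u\<in>V'. {u, x}\<in>E'} = d"
      by (simp add: card_image)
    have sub: "{u\<in>V'. {u, x}\<in>E'} \<subseteq> {u\<in>V. {u, x}\<in>E}" using c' by auto
    have fin: "finite {u\<in>V. {u, x}\<in>E}" using G unfolding is_graph_def by auto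
    have "card {u\<in>V. {u, x}\<in>E} \<le> d" using deg x c'(1) unfolding degree_def by auto
    then have "{u\<in>V'. {u, x}\<in>E'} = {u\<in>V. {u, x}\<in>E}"
      using card_subset_eq[OF fin sub] card_mono[OF fin sub] c1 by linarith
    moreover have "{y, x} \<in> E" using e by (simp add: insert_commute)
    moreover have "y \<in> V" using e G unfolding is_graph_def by auto
    ultimately show ?thesis by blast
  qed
  have conn: "(\<lambda>x y. {x, y} \<in> E)\<^sup>*\<^sup>* u v" if c: "(V', E') \<in> C" and u: "u \<in> V'" and v: "v \<in> V'" for V' E' u v
  proof -
    from c have c': "V' \<subseteq> V" "E' \<subseteq> E" "is_graph V' E'" "graph_iso VH EH V' E'" unfolding memC by auto
    then obtain f where f: "bij_betw f VH V'" "\<forall>x\<in>VH. \<forall>y\<in>VH. {x,y}\<in>EH \<longleftrightarrow> {f x,f y}\<in>E'"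
      unfolding graph_iso_def by auto
    obtain a where a: "a \<in> VH" "u = f a" using f(1) u unfolding bij_betw_def by auto
    obtain b where b: "b \<in> VH" "v = f b" using f(1) v unfolding bij_betw_def by auto
    have "(\<lambda>x y. {x, y} \<in> EH)\<^sup>*\<^sup>* a b" using con a b unfolding connected_graph_def by auto
    then have "(\<lambda>x y. {x, y} \<in> E')\<^sup>*\<^sup>* u v" using iso_path[OF f GH] a b by auto
    then show ?thesis by (rule rtranclp_mono[THEN predicate2D, rotated]) (use c'(2) in auto)
  qed
  have Eeq: "E' = {e\<in>E. e \<subseteq> V'}" if c: "(V', E') \<in> C" for V' E'
  proof
    show "E' \<subseteq> {e\<in>E. e \<subseteq> V'}" using c unfolding memC is_graph_def by auto
  next
    show "{e\<in>E. e \<subseteq> V'} \<subseteq> E'"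
    proof
      fix e assume e: "e \<in> {e\<in>E. e \<subseteq> V'}"
      have "card e = 2" using e G unfolding is_graph_def by auto
      then obtain x y where xy: "e = {x, y}" unfolding card_2_iff by blast
      then have "y \<in> V'" "{y, x} \<in> E'" using closed[OF c, of x y] e by auto
      then show "e \<in> E'" using xy by (simp add: insert_commute)
    qed
  qed
  have sub_of: "V1 \<subseteq> V2" if c1: "(V1, E1) \<in> C" and c2: "(V2, E2) \<in> C" and z: "z \<in> V1" "z \<in> V2" for V1 E1 V2 E2 z
  proof
    fix u assume "u \<in> V1"
    then have "(\<lambda>x y. {x, y} \<in> E)\<^sup>*\<^sup>* z u" using conn[OF c1 z(1)] by auto
    then show "u \<in> V2"
    proof (induction rule: rtranclp_induct)
      case base then show ?case using z by simp
    next
      case (step a b) then show ?case using closed[OF c2, of a b] by auto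
    qed
  qed
  have inj: "inj_on fst C"
  proof (rule inj_onI)
    fix p q assume p: "p \<in> C" and q: "q \<in> C" and eq: "fst p = fst q"
    obtain V1 E1 where p': "p = (V1, E1)" by (cases p)
    obtain V2 E2 where q': "q = (V2, E2)" by (cases q)
    show "p = q" using Eeq[of V1 E1] Eeq[of V2 E2] p q eq p' q' by auto
  qed
  have disj: "pairwise disjnt (fst ` C)"
  proof (rule pairwiseI)
    fix A B assume A: "A \<in> fst ` C" and B: "B \<in> fst ` C" and ne: "A \<noteq> B"
    obtain p1 where "p1 \<in> C" "A = fst p1" using A by blast
    then have c1: "(A, snd p1) \<in> C" by simp
    obtain p2 where "p2 \<in> C" "B = fst p2" using B by blast
    then have c2: "(B, snd p2) \<in> C" by simp
    show "disjnt A B"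
    proof (rule ccontr)
      assume "\<not> disjnt A B"
      then obtain z where "z \<in> A" "z \<in> B" unfolding disjnt_def by auto
      then have "A \<subseteq> B" "B \<subseteq> A" using sub_of[OF c1 c2] sub_of[OF c2 c1] by auto
      then show False using ne by auto
    qed
  qed
  have finV: "finite V" using G unfolding is_graph_def by auto
  have finC: "finite C" unfolding C_def by (rule copies_finite[OF G])
  have cardV: "card A = card VH" if A_in: "A \<in> fst ` C" for A
  proof -
    obtain p where "p \<in> C" "A = fst p" using A_in by blast
    then have "(A, snd p) \<in> C" by simp
    then obtain E1 where "(A, E1) \<in> C" by blast
    then obtain f where "bij_betw f VH A" unfolding memC graph_iso_def by auto
    then show ?thesis by (simp add: bij_betw_same_card)
  qed
  have "card (\<Union>(fst ` C)) = sum card (fst ` C)"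
    by (rule card_Union_disjoint[OF disj]) (use finV in \<open>auto simp: memC intro: finite_subset[OF _ finV]\<close>)
  also have "\<dots> = card (fst ` C) * card VH" using cardV by simp
  also have "\<dots> = card C * card VH" using card_image[OF inj] by simp
  finally have "card C * card VH = card (\<Union>(fst ` C))" by simp
  also have "\<dots> \<le> card V" by (rule card_mono[OF finV]) (auto simp: memC)
  finally show ?thesis unfolding count_copies_def C_def .
qed



lemma divmod_inj:
  fixes i j a b m :: nat
  assumes "i * m + a = j * m + b" "a < m" "b < m"
  shows "i = j \<and> a = b"
proof -
  have m: "m > 0" using assms(2) by simp
  have d1: "(i * m + a) div m = i" using assms(2) m by simp
  have d2: "(j * m + b) div m = j" using assms(3) m by simp
  have r1: "(i * m + a) mod m = a" using assms(2) by simp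
  have r2: "(j * m + b) mod m = b" using assms(3) by simp
  have "i = (i * m + a) div m" using d1 by simp
  also have "\<dots> = (j * m + b) div m" using assms(1) by simp
  also have "\<dots> = j" by (rule d2)
  finally have ij: "i = j" .
  have "a = (i * m + a) mod m" using r1 by simp
  also have "\<dots> = (j * m + b) mod m" using assms(1) by simp
  also have "\<dots> = b" by (rule r2)
  finally show ?thesis using ij by simp
qed

lemma doubleton_comm: "{a, b} = {b, a}"
  by (rule insert_commute)

lemma lower:
  fixes VH :: "'a set" and EH :: "'a set set"
  assumes GH: "is_graph VH EH" and ne: "VH \<noteq> {}" and reg: "regular d VH EH"
  shows "\<exists>E. is_graph {0..<n} E \<and> (\<forall>v\<in>{0..<n}. degree {0..<n} E v \<le> d) \<and>
             n div card VH \<le> count_copies VH EH {0..<n} E"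
proof -
  define m where "m = card VH"
  define q where "q = n div m"
  have finH: "finite VH" using GH unfolding is_graph_def by auto
  have m0: "m > 0" using finH ne unfolding m_def by (simp add: card_gt_0_iff)
  obtain h where h: "bij_betw h VH {0..<m}" using ex_bij_betw_finite_nat[OF finH] unfolding m_def by blast
  have hlt: "x \<in> VH \<Longrightarrow> h x < m" for x using h bij_betwE by fastforce
  have hinj: "x \<in> VH \<Longrightarrow> y \<in> VH \<Longrightarrow> h x = h y \<Longrightarrow> x = y" for x y
    using h unfolding bij_betw_def inj_on_def by blast
  define phi where "phi i x = i * m + h x" for i x
  have phi_inj: "i = j \<and> x = y" if "phi i x = phi j y" "x \<in> VH" "y \<in> VH" for i j x y
    using divmod_inj[of i m "h x" j "h y"] that hlt hinj unfolding phi_def by blast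
  have qm: "q * m \<le> n" unfolding q_def by simp
  have phi_lt: "phi i x < n" if "i < q" "x \<in> VH" for i x
  proof -
    have "phi i x < i * m + m" using hlt[OF that(2)] unfolding phi_def by simp
    also have "\<dots> = Suc i * m" by simp
    also have "\<dots> \<le> q * m" using that(1) by (intro mult_le_mono1) simp
    finally show ?thesis using qm by simp
  qed
  have edgeH: "x \<in> VH \<and> y \<in> VH \<and> x \<noteq> y" if "{x, y} \<in> EH" for x y
  proof -
    have "{x,y} \<subseteq> VH" "card {x, y} = 2" using GH that unfolding is_graph_def by auto
    then show ?thesis by (cases "x = y") auto
  qed
  define E0 where "E0 = {{phi i x, phi i y} | i x y. i < q \<and> {x, y} \<in> EH}"
  have gr: "is_graph {0..<n} E0"
    unfolding is_graph_def
  proof (intro conjI ballI)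
    fix e assume "e \<in> E0"
    then obtain i x y where e: "e = {phi i x, phi i y}" "i < q" "{x, y} \<in> EH" unfolding E0_def by blast
    have xy: "x \<in> VH" "y \<in> VH" "x \<noteq> y" using edgeH[OF e(3)] by auto
    have "phi i x \<noteq> phi i y" using phi_inj xy by blast
    then show "card e = 2" using e(1) by simp
    show "e \<subseteq> {0..<n}" using e phi_lt xy by auto
  qed simp
  have deg: "degree {0..<n} E0 v \<le> d" if v: "v \<in> {0..<n}" for v
  proof (cases "\<exists>i0 x0. i0 < q \<and> x0 \<in> VH \<and> v = phi i0 x0")
    case True
    then obtain i0 x0 where v0: "i0 < q" "x0 \<in> VH" "v = phi i0 x0" by blast
    have "{u\<in>{0..<n}. {u, v} \<in> E0} \<subseteq> phi i0 ` {y\<in>VH. {y, x0} \<in> EH}"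
    proof
      fix u assume "u \<in> {u\<in>{0..<n}. {u, v} \<in> E0}"
      then obtain i x y where e: "{u, v} = {phi i x, phi i y}" "i < q" "{x, y} \<in> EH"
        unfolding E0_def by blast
      have xy: "x \<in> VH" "y \<in> VH" using edgeH[OF e(3)] by auto
      show "u \<in> phi i0 ` {y\<in>VH. {y, x0} \<in> EH}"
      proof (cases "v = phi i y")
        case True
        then have "phi i y = phi i0 x0" using v0(3) by simp
        then have "i = i0 \<and> y = x0" using phi_inj[of i y i0 x0] v0(2) xy(2) by blast
        then have "i = i0" "y = x0" by auto
        moreover have "u = phi i x" using e(1) True by (auto simp: doubleton_eq_iff)
        ultimately show ?thesis using e(3) xy by auto
      next
        case False
        then have "v = phi i x" "u = phi i y" using e(1) by (auto simp: doubleton_eq_iff)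
        then have "phi i x = phi i0 x0" using v0(3) by simp
        then have "i = i0 \<and> x = x0" using phi_inj[of i x i0 x0] v0(2) xy(1) by blast
        then have "i = i0" "x = x0" by auto
        moreover have "{y, x} \<in> EH" using e(3) doubleton_comm by metis
        ultimately show ?thesis using xy \<open>u = phi i y\<close> by auto
      qed
    qed
    then have "degree {0..<n} E0 v \<le> card (phi i0 ` {y\<in>VH. {y, x0} \<in> EH})"
      unfolding degree_def using finH by (intro card_mono) auto
    also have "\<dots> \<le> card {y\<in>VH. {y, x0} \<in> EH}" by (rule card_image_le) (use finH in auto)
    also have "\<dots> = d" using reg v0(2) unfolding regular_def degree_def by auto
    finally show ?thesis .
  next
    case False
    have "{u\<in>{0..<n}. {u, v} \<in> E0} = {}"
    proof (rule ccontr)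
      assume "{u\<in>{0..<n}. {u, v} \<in> E0} \<noteq> {}"
      then obtain u where "{u, v} \<in> E0" by blast
      then obtain i x y where e: "{u, v} = {phi i x, phi i y}" "i < q" "{x, y} \<in> EH"
        unfolding E0_def by blast
      have xy: "x \<in> VH" "y \<in> VH" using edgeH[OF e(3)] by auto
      have "v = phi i x \<or> v = phi i y" using e(1) by (auto simp: doubleton_eq_iff)
      then show False using False e(2) xy by blast
    qed
    then have "degree {0..<n} E0 v = 0" unfolding degree_def by (metis card.empty)
    then show ?thesis by simp
  qed
  define Ci where "Ci i = (phi i ` VH, {{phi i x, phi i y} | x y. {x, y} \<in> EH})" for i
  let ?C = "{(V', E'). V' \<subseteq> {0..<n} \<and> E' \<subseteq> E0 \<and> is_graph V' E' \<and> graph_iso VH EH V' E'}"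
  have inC: "Ci i \<in> ?C" if i: "i < q" for i
  proof -
    have injp: "inj_on (phi i) VH" using phi_inj by (auto intro: inj_onI)
    have s1: "phi i ` VH \<subseteq> {0..<n}" using phi_lt i by auto
    have s2: "{{phi i x, phi i y} | x y. {x, y} \<in> EH} \<subseteq> E0" unfolding E0_def using i by blast
    have g: "is_graph (phi i ` VH) {{phi i x, phi i y} | x y. {x, y} \<in> EH}"
      unfolding is_graph_def
    proof (intro conjI ballI)
      show "finite (phi i ` VH)" using finH by simp
    next
      fix e assume "e \<in> {{phi i x, phi i y} | x y. {x, y} \<in> EH}"
      then obtain x y where e: "e = {phi i x, phi i y}" "{x, y} \<in> EH" by blast
      have xy: "x \<in> VH" "y \<in> VH" "x \<noteq> y" using edgeH[OF e(2)] by auto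
      have "phi i x \<noteq> phi i y" using phi_inj xy by blast
      then show "card e = 2" using e(1) by simp
      show "e \<subseteq> phi i ` VH" using e xy by auto
    qed
    have iso: "graph_iso VH EH (phi i ` VH) {{phi i x, phi i y} | x y. {x, y} \<in> EH}"
      unfolding graph_iso_def
    proof (intro exI conjI ballI)
      show "bij_betw (phi i) VH (phi i ` VH)" using injp by (simp add: bij_betw_def)
    next
      fix x y assume x: "x \<in> VH" and y: "y \<in> VH"
      show "{x, y} \<in> EH \<longleftrightarrow> {phi i x, phi i y} \<in> {{phi i x, phi i y} | x y. {x, y} \<in> EH}"
      proof
        assume "{x, y} \<in> EH" then show "{phi i x, phi i y} \<in> {{phi i x, phi i y} | x y. {x, y} \<in> EH}" by blast
      next
        assume "{phi i x, phi i y} \<in> {{phi i x, phi i y} | x y. {x, y} \<in> EH}"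
        then obtain x' y' where e: "{phi i x, phi i y} = {phi i x', phi i y'}" "{x', y'} \<in> EH" by blast
        have xy: "x' \<in> VH" "y' \<in> VH" using edgeH[OF e(2)] by auto
        have "{x, y} = {x', y'}"
        proof (cases "phi i x = phi i x'")
          case True
          then have "phi i y = phi i y'" using e(1) by (auto simp: doubleton_eq_iff)
          then show ?thesis using True phi_inj x y xy by blast
        next
          case False
          then have "phi i x = phi i y'" "phi i y = phi i x'" using e(1) by (auto simp: doubleton_eq_iff)
          then have "x = y'" "y = x'" using phi_inj x y xy by blast+
          then show ?thesis using doubleton_comm by metis
        qed
        then show "{x, y} \<in> EH" using e(2) by simp
      qed
    qed
    show ?thesis unfolding Ci_def using s1 s2 g iso by simp
  qed
  have injC: "inj_on Ci {..<q}"
  proof (rule inj_onI)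
    fix i j assume "i \<in> {..<q}" "j \<in> {..<q}" "Ci i = Ci j"
    then have eq: "phi i ` VH = phi j ` VH" unfolding Ci_def by simp
    obtain w where w: "w \<in> VH" using ne by blast
    then have "phi i w \<in> phi j ` VH" using eq by blast
    then obtain w' where "w' \<in> VH" "phi i w = phi j w'" by blast
    then show "i = j" using phi_inj w by blast
  qed
  have "q = card (Ci ` {..<q})" using card_image[OF injC] by simp
  also have "\<dots> \<le> card ?C"
  proof (rule card_mono)
    show "finite ?C" by (rule copies_finite[OF gr])
    show "Ci ` {..<q} \<subseteq> ?C"
    proof
      fix p assume "p \<in> Ci ` {..<q}"
      then obtain i where "i < q" "p = Ci i" by blast
      then show "p \<in> ?C" using inC[OF \<open>i < q\<close>] by (simp only:)
    qed
  qed
  finally have "q \<le> count_copies VH EH {0..<n} E0" unfolding count_copies_def .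
  then show ?thesis using gr deg unfolding q_def m_def by blast
qed


theorem mainTheorem18:
  fixes VH :: "'a set" and EH :: "'a set set" and k n :: nat
  assumes "k \<ge> 2"
    and "is_graph VH EH" and "connected_graph VH EH" and "regular (k - 2) VH EH"
    and "n > 0"
  shows "ex_gen n VH EH (star_V k) (star_E k) = n div card VH"
proof -
  note k = assms(1) and GH = assms(2) and con = assms(3) and reg = assms(4)
  have ne: "VH \<noteq> {}" using con unfolding connected_graph_def by simp
  have finH: "finite VH" using GH unfolding is_graph_def by simp
  have m0: "card VH > 0" using ne finH by (simp add: card_gt_0_iff)
  define S where "S = {count_copies VH EH {0..<n} E | E.
       is_graph {0..<n} E \<and> F_free (star_V k) (star_E k) {0..<n} E}"
  have le: "y \<le> n div card VH" if "y \<in> S" for y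
  proof -
    obtain E where E: "y = count_copies VH EH {0..<n} E" "is_graph {0..<n} E"
      "F_free (star_V k) (star_E k) {0..<n} E" using \<open>y \<in> S\<close> unfolding S_def by blast
    have deg: "\<forall>v\<in>{0..<n}. degree {0..<n} E v \<le> k - 2"
      using deg_le_of_free[OF E(2) k E(3)] by blast
    have "y * card VH \<le> card {0..<n}" using upper[OF E(2) deg GH con reg] E(1) by simp
    then show ?thesis using m0 by (simp add: less_eq_div_iff_mult_less_eq)
  qed
  obtain E0 where E0: "is_graph {0..<n} E0" "\<forall>v\<in>{0..<n}. degree {0..<n} E0 v \<le> k - 2"
    "n div card VH \<le> count_copies VH EH {0..<n} E0"
    using lower[OF GH ne reg, of n] by blast
  have free0: "F_free (star_V k) (star_E k) {0..<n} E0" by (rule free_of_deg[OF E0(1) k E0(2)])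
  have inS: "count_copies VH EH {0..<n} E0 \<in> S" unfolding S_def using E0(1) free0 by blast
  then have eq: "count_copies VH EH {0..<n} E0 = n div card VH" using le E0(3) by (simp add: le_antisym)
  have finS: "finite S" by (rule finite_subset[of _ "{..n div card VH}"]) (use le in auto)
  have "Max S = n div card VH" by (rule Max_eqI[OF finS]) (use le inS eq in auto)
  then show ?thesis unfolding ex_gen_def S_def .
qed

end
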